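(* Let $L$ be a complex Leibniz algebra, let $I$ be the ideal of $L$ generated by all squares $[x,x]$, $x\in L$, and suppose that $L/I\cong\mathfrak{e}(2)$ and that $I$, regarded as a right $\mathfrak{e}(2)$-module via $(i,x+I)\mapsto[i,x]$, is isomorphic to the four-dimensional module $V$ with basis $X_1,X_2,X_3,X_4$ and action $(X_1,p_+)=X_2$, $(X_3,p_-)=X_4$, $(X_1,l)=\tfrac12X_1$, $(X_2,l)=-\tfrac12X_2$, $(X_3,l)=-\tfrac12X_3$, $(X_4,l)=\tfrac12X_4$ (all other products of basis elements of $V$ with $l,p_+,p_-$ being zero). Then there exists a basis $\{l,p_+,p_-,X_1,X_2,X_3,X_4\}$ of $L$ (with $X_1,\dots,X_4\in I$ and $l,p_+,p_-$ mapping to the corresponding basis elements of $\mathfrak{e}(2)$) in which the only nonzero products are $[l,p_+]=p_+$, $[p_+,l]=-p_+$, $[l,p_-]=-p_-$, $[p_-,l]=p_-$, $[X_1,p_+]=X_2$, $[X_3,p_-]=X_4$, $[X_1,l]=\tfrac12X_1$, $[X_2,l]=-\tfrac12X_2$, $[X_3,l]=-\tfrac12X_3$, $[X_4,l]=\tfrac12X_4$.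
   Context: A (right) Leibniz algebra is a vector space $L$ with a bilinear bracket satisfying $[[x,y],z]=[[x,z],y]+[x,[y,z]]$ for all $x,y,z\in L$. The ideal $I$ generated by the squares satisfies $[L,I]=0$, so $L/I$ is a Lie algebra and $I$ is a right $L/I$-module via $(i,x+I)\mapsto[i,x]$. Here $\mathfrak{e}(2)$ denotes the complex (complexified Euclidean) Lie algebra with basis $\{l,p_+,p_-\}$ and brackets $[l,p_+]=p_+$, $[l,p_-]=-p_-$, $[p_+,p_-]=0$. A right module $V$ over a Lie algebra $\mathfrak g$ satisfies $((v,x),y)-((v,y),x)=(v,[x,y])$. *)

theory Defs
  imports Complex_Main "HOL-Library.Product_Plus"
begin

text \<open>A complex vector space is modelled by a type 'a with an additive group
structure and a scalar multiplication sm :: complex => 'a => 'a satisfying the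
vector space axioms (locale vector_space).\<close>

definition is_bilinear :: "(complex \<Rightarrow> 'a::ab_group_add \<Rightarrow> 'a) \<Rightarrow> ('a \<Rightarrow> 'a \<Rightarrow> 'a) \<Rightarrow> bool" where
  "is_bilinear sm br \<longleftrightarrow> (\<forall>x. Vector_Spaces.linear sm sm (br x)) \<and> (\<forall>y. Vector_Spaces.linear sm sm (\<lambda>x. br x y))"

definition right_leibniz :: "('a::ab_group_add \<Rightarrow> 'a \<Rightarrow> 'a) \<Rightarrow> bool" where
  "right_leibniz br \<longleftrightarrow> (\<forall>x y z. br (br x y) z = br (br x z) y + br x (br y z))"

definition is_ideal :: "(complex \<Rightarrow> 'a::ab_group_add \<Rightarrow> 'a) \<Rightarrow> ('a \<Rightarrow> 'a \<Rightarrow> 'a) \<Rightarrow> 'a set \<Rightarrow> bool" where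
  "is_ideal sm br J \<longleftrightarrow> module.subspace sm J \<and> (\<forall>x\<in>J. \<forall>y. br x y \<in> J \<and> br y x \<in> J)"

definition square_ideal :: "(complex \<Rightarrow> 'a::ab_group_add \<Rightarrow> 'a) \<Rightarrow> ('a \<Rightarrow> 'a \<Rightarrow> 'a) \<Rightarrow> 'a set" where
  "square_ideal sm br = \<Inter>{J. is_ideal sm br J \<and> (\<forall>x. br x x \<in> J)}"

text \<open>The Lie algebra e(2): an element (a, b, c) stands for a l + b p_+ + c p_-.\<close>
type_synonym e2 = "complex \<times> complex \<times> complex"

definition e2_scale :: "complex \<Rightarrow> e2 \<Rightarrow> e2" where
  "e2_scale s v = (case v of (a, b, c) \<Rightarrow> (s * a, s * b, s * c))"

text \<open>[l,p+] = p+, [l,p-] = -p-, [p+,p-] = 0, extended bilinearly and antisymmetrically.\<close>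
definition e2_br :: "e2 \<Rightarrow> e2 \<Rightarrow> e2" where
  "e2_br v w = (case v of (a, b, c) \<Rightarrow> case w of (a', b', c') \<Rightarrow>
      (0, a * b' - b * a', c * a' - a * c'))"

text \<open>The four-dimensional right e(2)-module V: (x1,x2,x3,x4) stands for
  x1 X1 + x2 X2 + x3 X3 + x4 X4, with (X1,p+) = X2, (X3,p-) = X4,
  (X1,l) = X1/2, (X2,l) = -X2/2, (X3,l) = -X3/2, (X4,l) = X4/2, all else zero.\<close>
type_synonym modV = "complex \<times> complex \<times> complex \<times> complex"

definition V_act :: "modV \<Rightarrow> e2 \<Rightarrow> modV" where
  "V_act v x = (case v of (x1, x2, x3, x4) \<Rightarrow> case x of (a, b, c) \<Rightarrow>
     (a / 2 * x1, b * x1 - a / 2 * x2, - a / 2 * x3, c * x3 + a / 2 * x4))"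

text \<open>The target multiplication table, for the basis list
  B = [l, p+, p-, X1, X2, X3, X4] (indices 0..6): value of [B!i, B!j].\<close>
definition target_table :: "(complex \<Rightarrow> 'a::ab_group_add \<Rightarrow> 'a) \<Rightarrow> 'a list \<Rightarrow> nat \<Rightarrow> nat \<Rightarrow> 'a" where
  "target_table sm B i j =
    (if (i, j) = (0, 1) then B ! 1
     else if (i, j) = (1, 0) then - (B ! 1)
     else if (i, j) = (0, 2) then - (B ! 2)
     else if (i, j) = (2, 0) then B ! 2
     else if (i, j) = (3, 1) then B ! 4
     else if (i, j) = (5, 2) then B ! 6
     else if (i, j) = (3, 0) then sm (1/2) (B ! 3)
     else if (i, j) = (4, 0) then sm (-1/2) (B ! 4)
     else if (i, j) = (5, 0) then sm (-1/2) (B ! 5)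
     else if (i, j) = (6, 0) then sm (1/2) (B ! 6)
     else 0)"

end

theory Submission
  imports Defs
begin


locale SU =
  fixes sm :: "complex \<Rightarrow> 'a::ab_group_add \<Rightarrow> 'a"
    and br :: "'a \<Rightarrow> 'a \<Rightarrow> 'a"
    and \<pi> :: "'a \<Rightarrow> e2"
    and \<phi> :: "'a \<Rightarrow> modV"
  assumes vs: "vector_space sm"
    and bil: "is_bilinear sm br"
    and leib: "right_leibniz br"
    and pi_lin: "Vector_Spaces.linear sm e2_scale \<pi>"
    and pi_surj: "surj \<pi>"
    and pi_ker: "{x. \<pi> x = (0, 0, 0)} = square_ideal sm br"
    and pi_hom: "\<forall>x y. \<pi> (br x y) = e2_br (\<pi> x) (\<pi> y)"
    and phi_add: "\<forall>u\<in>square_ideal sm br. \<forall>v\<in>square_ideal sm br. \<phi> (u + v) = \<phi> u + \<phi> v"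
    and phi_scale: "\<forall>c. \<forall>u\<in>square_ideal sm br. \<phi> (sm c u) = (case \<phi> u of (x1, x2, x3, x4) \<Rightarrow> (c * x1, c * x2, c * x3, c * x4))"
    and phi_bij: "bij_betw \<phi> (square_ideal sm br) UNIV"
    and phi_equiv: "\<forall>i\<in>square_ideal sm br. \<forall>x. \<phi> (br i x) = V_act (\<phi> i) (\<pi> x)"
begin

abbreviation "I \<equiv> square_ideal sm br"

sublocale V: vector_space sm by (rule vs)

lemma mhR: "module_hom sm sm (br x)"
  using bil by (simp add: is_bilinear_def module_hom_iff_linear)
lemma mhL: "module_hom sm sm (\<lambda>x. br x y)"
  using bil by (simp add: is_bilinear_def module_hom_iff_linear)
lemma mhP: "module_hom sm e2_scale \<pi>"
  using pi_lin by (simp add: module_hom_iff_linear)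

lemma brR_add: "br x (y + z) = br x y + br x z" using module_hom.add[OF mhR] .
lemma brR_scale: "br x (sm c y) = sm c (br x y)" using module_hom.scale[OF mhR] .
lemma brR_0[simp]: "br x 0 = 0" using module_hom.zero[OF mhR] .
lemma brR_neg: "br x (- y) = - br x y" using module_hom.neg[OF mhR] .
lemma brR_diff: "br x (y - z) = br x y - br x z" using module_hom.diff[OF mhR] .
lemma brL_add: "br (y + z) x = br y x + br z x" using module_hom.add[OF mhL] .
lemma brL_scale: "br (sm c y) x = sm c (br y x)" using module_hom.scale[OF mhL] .
lemma brL_0[simp]: "br 0 x = 0" using module_hom.zero[OF mhL] .
lemma brL_neg: "br (- y) x = - br y x" using module_hom.neg[OF mhL] .
lemma brL_diff: "br (y - z) x = br y x - br z x" using module_hom.diff[OF mhL] .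

lemma pi_add: "\<pi> (x + y) = \<pi> x + \<pi> y" using module_hom.add[OF mhP] .
lemma pi_scale: "\<pi> (sm c y) = e2_scale c (\<pi> y)" using module_hom.scale[OF mhP] .
lemma pi_neg: "\<pi> (- y) = - \<pi> y" using module_hom.neg[OF mhP] .
lemma pi_diff: "\<pi> (x - y) = \<pi> x - \<pi> y" using module_hom.diff[OF mhP] .

lemma inI: "x \<in> I \<longleftrightarrow> \<pi> x = (0,0,0)" by (subst pi_ker[symmetric]) simp

lemma leibI: "br (br x y) z = br (br x z) y + br x (br y z)"
  by (rule leib[unfolded right_leibniz_def, rule_format])

lemma I_add: "x \<in> I \<Longrightarrow> y \<in> I \<Longrightarrow> x + y \<in> I"
  by (simp add: inI pi_add)
lemma I_scale: "x \<in> I \<Longrightarrow> sm c x \<in> I"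
  by (simp add: inI pi_scale e2_scale_def)
lemma I_neg: "x \<in> I \<Longrightarrow> - x \<in> I"
  by (simp add: inI pi_neg)
lemma I_0: "0 \<in> I" using module_hom.zero[OF mhP] by (simp add: inI zero_prod_def)
lemma I_brL: "x \<in> I \<Longrightarrow> br x y \<in> I"
  by (simp add: inI pi_hom e2_br_def split: prod.splits)

lemma phi_inj: "inj_on \<phi> I" using phi_bij bij_betw_def by blast
lemma phi_0: "\<phi> 0 = 0"
proof -
  have "\<phi> (0 + 0) = \<phi> 0 + \<phi> 0" using phi_add I_0 by blast
  thus ?thesis by simp
qed
lemma phi_eqI: "x \<in> I \<Longrightarrow> y \<in> I \<Longrightarrow> \<phi> x = \<phi> y \<Longrightarrow> x = y"
  using phi_inj by (meson inj_onD)
lemma phi_surj: "\<exists>x\<in>I. \<phi> x = t"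
  using phi_bij unfolding bij_betw_def by (metis UNIV_I imageE)

lemma ann: "i \<in> I \<Longrightarrow> br x i = 0"
proof -
  let ?A = "{i. \<forall>x. br x i = 0}"
  have "is_ideal sm br ?A \<and> (\<forall>y. br y y \<in> ?A)"
  proof (intro conjI allI)
    show "is_ideal sm br ?A"
      unfolding is_ideal_def V.subspace_def
    proof (intro conjI ballI allI)
      fix i y assume i: "i \<in> ?A"
      show "br i y \<in> ?A"
      proof (intro CollectI allI)
        fix x show "br x (br i y) = 0"
          using leibI[of x i y] i by simp
      qed
      show "br y i \<in> ?A" using i by simp
    qed (auto simp: brR_add brR_scale)
    fix y show "br y y \<in> ?A"
      using leibI[of _ y y] by simp
  qed
  moreover assume "i \<in> I"
  ultimately show ?thesis unfolding square_ideal_def by blast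
qed


lemma phi_br1: "i \<in> I \<Longrightarrow> \<pi> x = (1,0,0) \<Longrightarrow> \<phi> i = (a,b,e,f) \<Longrightarrow> \<phi> (br i x) = (a/2, -b/2, -e/2, f/2)"
  using phi_equiv by (simp add: V_act_def)

lemma phi_sm: "i \<in> I \<Longrightarrow> \<phi> i = (a,b,e,f) \<Longrightarrow> \<phi> (sm c i) = (c*a, c*b, c*e, c*f)"
  using phi_scale by simp

lemma uniq:
  assumes d: "d \<in> I" and x: "\<pi> x = (1,0,0)" and eq: "br d x = sm c d"
    and c1: "c \<noteq> 1/2" and c2: "c \<noteq> -1/2"
  shows "d = 0"
proof -
  obtain a b e f where p: "\<phi> d = (a,b,e,f)" by (cases "\<phi> d") auto
  have "(a/2, -b/2, -e/2, f/2) = (c*a, c*b, c*e, c*f)"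
    using phi_br1[OF d x p] phi_sm[OF d p, of c] eq by simp
  hence "a * (1/2 - c) = 0" "b * (-1/2 - c) = 0" "e * (-1/2 - c) = 0" "f * (1/2 - c) = 0"
    by (auto simp: algebra_simps)
  hence "a = 0" "b = 0" "e = 0" "f = 0" using c1 c2 by auto
  hence "\<phi> d = \<phi> 0" using p phi_0 by (simp add: zero_prod_def)
  thus ?thesis using phi_eqI d I_0 by blast
qed

lemma solve:
  assumes e: "e \<in> I" and x: "\<pi> x = (1,0,0)"
    and c1: "c \<noteq> 1/2" and c2: "c \<noteq> -1/2"
  shows "\<exists>v\<in>I. br v x = e + sm c v"
proof -
  obtain e1 e2 e3 e4 where p: "\<phi> e = (e1,e2,e3,e4)" by (cases "\<phi> e") auto
  define t where "t = (e1/(1/2-c), e2/(-1/2-c), e3/(-1/2-c), e4/(1/2-c))"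
  obtain v where v: "v \<in> I" "\<phi> v = t" using phi_surj by blast
  have h1: "1/2 - c \<noteq> 0" "-1/2 - c \<noteq> 0" using c1 c2 by auto
  have "\<phi> (br v x) = \<phi> (e + sm c v)"
    using phi_br1[OF v(1) x v(2)[unfolded t_def]] phi_sm[OF v(1) v(2)[unfolded t_def], of c]
      phi_add e v(1) I_scale[OF v(1)] p h1
    by (simp add: field_simps)
  hence "br v x = e + sm c v"
    using phi_eqI I_brL[OF v(1)] I_add[OF e I_scale[OF v(1)]] by blast
  thus ?thesis using v by blast
qed


lemma lift: "\<exists>x. \<pi> x = t" using pi_surj by (metis surjD)

lemma construct:
  "\<exists>l p q. \<pi> l = (1,0,0) \<and> \<pi> p = (0,1,0) \<and> \<pi> q = (0,0,1) \<and> br l l = 0 \<and> br p l = - p \<and> br q l = q"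
proof -
  obtain l0 where l0: "\<pi> l0 = (1,0,0)" using lift by blast
  have A: "br l0 l0 \<in> I" by (simp add: inI pi_hom l0 e2_br_def)
  obtain u where u: "u \<in> I" "br u l0 = - br l0 l0 + sm 0 u"
    using solve[where c=0, OF I_neg[OF A] l0] by auto
  define l where "l = l0 + u"
  have l: "\<pi> l = (1,0,0)" using u(1) by (simp add: l_def pi_add l0 inI)
  have ll: "br l l = 0"
    using u by (simp add: l_def brL_add brR_add ann)
  obtain p0 where p0: "\<pi> p0 = (0,1,0)" using lift by blast
  have C: "br p0 l + p0 \<in> I" by (simp add: inI pi_hom l p0 pi_add e2_br_def zero_prod_def)
  obtain v where v: "v \<in> I" "br v l = - (br p0 l + p0) + sm (-1) v"
    using solve[where c="-1", OF I_neg[OF C] l] by auto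
  obtain q0 where q0: "\<pi> q0 = (0,0,1)" using lift by blast
  have E: "br q0 l - q0 \<in> I" by (simp add: inI pi_hom l q0 pi_diff e2_br_def zero_prod_def)
  obtain w where w: "w \<in> I" "br w l = - (br q0 l - q0) + sm 1 w"
    using solve[where c=1, OF I_neg[OF E] l] by (auto simp: complex_eq_iff)
  show ?thesis
  proof (intro exI conjI)
    show "\<pi> l = (1,0,0)" by fact
    show "br l l = 0" by fact
    show "\<pi> (p0 + v) = (0,1,0)" using v(1) by (simp add: pi_add p0 inI)
    show "\<pi> (q0 + w) = (0,0,1)" using w(1) by (simp add: pi_add q0 inI)
    show "br (p0 + v) l = - (p0 + v)" using v(2) by (simp add: brL_add)
    show "br (q0 + w) l = q0 + w" using w(2) by (simp add: brL_add)
  qed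
qed

lemma table:
  assumes l: "\<pi> l = (1,0,0)" and p: "\<pi> p = (0,1,0)" and q: "\<pi> q = (0,0,1)"
    and ll: "br l l = 0" and pl: "br p l = - p" and ql: "br q l = q"
  shows "br l p = p" "br l q = - q" "br p p = 0" "br q q = 0" "br p q = 0" "br q p = 0"
proof -
  have d1: "br l p - p \<in> I" by (simp add: inI pi_hom l p pi_diff e2_br_def zero_prod_def)
  have e1: "br (br l p - p) l = sm (-1) (br l p - p)"
    using leibI[of l p l] by (simp add: brL_diff ll pl brR_neg)
  have "br l p - p = 0" using uniq[OF d1 l e1] by (simp add: complex_eq_iff)
  thus "br l p = p" by simp
  have d2: "br l q + q \<in> I" by (simp add: inI pi_hom l q pi_add e2_br_def zero_prod_def)
  have e2: "br (br l q + q) l = sm 1 (br l q + q)"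
    using leibI[of l q l] by (simp add: brL_add ll ql)
  have "br l q + q = 0" using uniq[OF d2 l e2] by (simp add: complex_eq_iff)
  thus "br l q = - q" by (simp add: eq_neg_iff_add_eq_0)
  have d3: "br p p \<in> I" by (simp add: inI pi_hom p e2_br_def)
  have e3: "br (br p p) l = sm (-2) (br p p)"
    using leibI[of p p l] by (simp add: pl brL_neg brR_neg V.scale_left_distrib[of "-1" "-1", simplified])
  show "br p p = 0" using uniq[OF d3 l e3] by (simp add: complex_eq_iff)
  have d4: "br q q \<in> I" by (simp add: inI pi_hom q e2_br_def)
  have e4: "br (br q q) l = sm 2 (br q q)"
    using leibI[of q q l] by (simp add: ql V.scale_left_distrib[of 1 1, simplified])
  show "br q q = 0" using uniq[OF d4 l e4] by (simp add: complex_eq_iff)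
  have d5: "br p q \<in> I" by (simp add: inI pi_hom p q e2_br_def)
  have e5: "br (br p q) l = sm 0 (br p q)"
    using leibI[of p q l] by (simp add: pl ql brL_neg)
  show "br p q = 0" using uniq[OF d5 l e5] by (simp add: complex_eq_iff)
  have d6: "br q p \<in> I" by (simp add: inI pi_hom p q e2_br_def)
  have e6: "br (br q p) l = sm 0 (br q p)"
    using leibI[of q p l] by (simp add: pl ql brR_neg)
  show "br q p = 0" using uniq[OF d6 l e6] by (simp add: complex_eq_iff)
qed

lemma act_eq: "i \<in> I \<Longrightarrow> y \<in> I \<Longrightarrow> V_act (\<phi> i) (\<pi> x) = \<phi> y \<Longrightarrow> br i x = y"
  using phi_equiv phi_eqI I_brL by metis

lemma pi_e2: "\<pi> (sm a l + sm b p + sm c q) = (a,b,c)"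
  if "\<pi> l = (1,0,0)" "\<pi> p = (0,1,0)" "\<pi> q = (0,0,1)" for a b c l p q
  using that by (simp add: pi_add pi_scale e2_scale_def)

lemma phi_comb:
  assumes "\<phi> X1 = (1,0,0,0)" "\<phi> X2 = (0,1,0,0)" "\<phi> X3 = (0,0,1,0)" "\<phi> X4 = (0,0,0,1)"
    and I: "X1 \<in> I" "X2 \<in> I" "X3 \<in> I" "X4 \<in> I"
  shows "sm d X1 + sm e X2 + sm f X3 + sm g X4 \<in> I"
    "\<phi> (sm d X1 + sm e X2 + sm f X3 + sm g X4) = (d,e,f,g)"
  using assms by (simp_all add: phi_add phi_sm I_add I_scale)

lemma final:
  "\<exists>l pp pm X1 X2 X3 X4.
           (let B = [l, pp, pm, X1, X2, X3, X4] in
              distinct B \<and> \<not> module.dependent sm (set B) \<and> module.span sm (set B) = UNIV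
            \<and> {X1, X2, X3, X4} \<subseteq> square_ideal sm br
            \<and> \<pi> l = (1, 0, 0) \<and> \<pi> pp = (0, 1, 0) \<and> \<pi> pm = (0, 0, 1)
            \<and> (\<forall>i<7. \<forall>j<7. br (B ! i) (B ! j) = target_table sm B i j))"
proof -
  obtain l p q where l: "\<pi> l = (1,0,0)" and p: "\<pi> p = (0,1,0)" and q: "\<pi> q = (0,0,1)"
    and ll: "br l l = 0" and pl: "br p l = - p" and ql: "br q l = q"
    using construct by blast
  note tb = table[OF l p q ll pl ql]
  obtain X1 where X1: "X1 \<in> I" "\<phi> X1 = (1,0,0,0)" using phi_surj by blast
  obtain X2 where X2: "X2 \<in> I" "\<phi> X2 = (0,1,0,0)" using phi_surj by blast
  obtain X3 where X3: "X3 \<in> I" "\<phi> X3 = (0,0,1,0)" using phi_surj by blast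
  obtain X4 where X4: "X4 \<in> I" "\<phi> X4 = (0,0,0,1)" using phi_surj by blast
  have piX: "\<pi> X1 = (0,0,0)" "\<pi> X2 = (0,0,0)" "\<pi> X3 = (0,0,0)" "\<pi> X4 = (0,0,0)"
    using X1 X2 X3 X4 by (simp_all add: inI)
  have dist: "distinct [l, p, q, X1, X2, X3, X4]"
    using l p q piX X1 X2 X3 X4 by auto
  have sX: "sm (1/2) X1 \<in> I" "sm (-1/2) X2 \<in> I" "sm (-1/2) X3 \<in> I" "sm (1/2) X4 \<in> I"
    using I_scale[OF X1(1)] I_scale[OF X2(1)] I_scale[OF X3(1)] I_scale[OF X4(1)] by blast+
  have a0: "br X1 l = sm (1/2) X1"
    by (rule act_eq[OF X1(1) sX(1)]) (use phi_sm[OF X1, of "1/2"] in \<open>simp add: X1(2) l V_act_def zero_prod_def\<close>)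
  have a1: "br X2 l = sm (-1/2) X2"
    by (rule act_eq[OF X2(1) sX(2)]) (use phi_sm[OF X2, of "-1/2"] in \<open>simp add: X2(2) l V_act_def zero_prod_def\<close>)
  have a2: "br X3 l = sm (-1/2) X3"
    by (rule act_eq[OF X3(1) sX(3)]) (use phi_sm[OF X3, of "-1/2"] in \<open>simp add: X3(2) l V_act_def zero_prod_def\<close>)
  have a3: "br X4 l = sm (1/2) X4"
    by (rule act_eq[OF X4(1) sX(4)]) (use phi_sm[OF X4, of "1/2"] in \<open>simp add: X4(2) l V_act_def zero_prod_def\<close>)
  have a4: "br X1 p = X2"
    by (rule act_eq[OF X1(1) X2(1)]) (use X2(2) in \<open>simp add: X1(2) p V_act_def zero_prod_def\<close>)
  have a5: "br X2 p = 0"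
    by (rule act_eq[OF X2(1) I_0]) (use phi_0 in \<open>simp add: X2(2) p V_act_def zero_prod_def\<close>)
  have a6: "br X3 p = 0"
    by (rule act_eq[OF X3(1) I_0]) (use phi_0 in \<open>simp add: X3(2) p V_act_def zero_prod_def\<close>)
  have a7: "br X4 p = 0"
    by (rule act_eq[OF X4(1) I_0]) (use phi_0 in \<open>simp add: X4(2) p V_act_def zero_prod_def\<close>)
  have a8: "br X1 q = 0"
    by (rule act_eq[OF X1(1) I_0]) (use phi_0 in \<open>simp add: X1(2) q V_act_def zero_prod_def\<close>)
  have a9: "br X2 q = 0"
    by (rule act_eq[OF X2(1) I_0]) (use phi_0 in \<open>simp add: X2(2) q V_act_def zero_prod_def\<close>)
  have a10: "br X3 q = X4"
    by (rule act_eq[OF X3(1) X4(1)]) (use X4(2) in \<open>simp add: X3(2) q V_act_def zero_prod_def\<close>)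
  have a11: "br X4 q = 0"
    by (rule act_eq[OF X4(1) I_0]) (use phi_0 in \<open>simp add: X4(2) q V_act_def zero_prod_def\<close>)
  note act = a0 a1 a2 a3 a4 a5 a6 a7 a8 a9 a10 a11
  have annX: "br y X1 = 0" "br y X2 = 0" "br y X3 = 0" "br y X4 = 0" for y
    using ann X1 X2 X3 X4 by auto
  have indep: "\<not> V.dependent (set [l, p, q, X1, X2, X3, X4])"
  proof
    assume "V.dependent (set [l, p, q, X1, X2, X3, X4])"
    then obtain u where u: "\<exists>v\<in>set [l, p, q, X1, X2, X3, X4]. u v \<noteq> 0"
      "(\<Sum>v\<in>set [l, p, q, X1, X2, X3, X4]. sm (u v) v) = 0"
      using V.dependent_finite[of "set [l, p, q, X1, X2, X3, X4]"] by auto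
    define Z where "Z = sm (u X1) X1 + sm (u X2) X2 + sm (u X3) X3 + sm (u X4) X4"
    have Z: "Z \<in> I" "\<phi> Z = (u X1, u X2, u X3, u X4)"
      unfolding Z_def using phi_comb[OF X1(2) X2(2) X3(2) X4(2) X1(1) X2(1) X3(1) X4(1)] by auto
    have s: "(sm (u l) l + sm (u p) p + sm (u q) q) + Z = 0"
      using u(2) dist by (simp add: Z_def add.assoc)
    hence "\<pi> ((sm (u l) l + sm (u p) p + sm (u q) q) + Z) = \<pi> 0" by simp
    hence "(u l, u p, u q) = (0,0,0)"
      using pi_e2[OF l p q] Z(1) I_0 by (simp add: pi_add inI)
    hence z: "u l = 0" "u p = 0" "u q = 0" by auto
    hence "Z = 0" using s by simp
    hence "(u X1, u X2, u X3, u X4) = (0,0,0,0)" using Z phi_0 by (simp add: zero_prod_def)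
    thus False using z u(1) by auto
  qed
  have span: "V.span (set [l, p, q, X1, X2, X3, X4]) = UNIV"
  proof (intro set_eqI iffI UNIV_I)
    fix x
    obtain a b c where abc: "\<pi> x = (a,b,c)" by (cases "\<pi> x") auto
    define Y where "Y = sm a l + sm b p + sm c q"
    have "x - Y \<in> I" using pi_e2[OF l p q] abc by (simp add: inI Y_def pi_diff zero_prod_def)
    moreover obtain d e f g where dg: "\<phi> (x - Y) = (d,e,f,g)" by (cases "\<phi> (x - Y)") auto
    define Z where "Z = sm d X1 + sm e X2 + sm f X3 + sm g X4"
    have Z: "Z \<in> I" "\<phi> Z = (d,e,f,g)"
      unfolding Z_def using phi_comb[OF X1(2) X2(2) X3(2) X4(2) X1(1) X2(1) X3(1) X4(1)] by auto
    ultimately have "x - Y = Z" using phi_eqI dg by metis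
    hence x: "x = Y + Z" by (simp add: algebra_simps)
    let ?S = "set [l, p, q, X1, X2, X3, X4]"
    have b: "v \<in> ?S \<Longrightarrow> sm k v \<in> V.span ?S" for v k
      by (intro V.span_scale V.span_base)
    have "Y \<in> V.span ?S" unfolding Y_def by (intro V.span_add b) auto
    moreover have "Z \<in> V.span ?S" unfolding Z_def by (intro V.span_add b) auto
    ultimately show "x \<in> V.span ?S" using x V.span_add by simp
  qed
  have lt7: "i = 0 \<or> i = 1 \<or> i = 2 \<or> i = 3 \<or> i = 4 \<or> i = 5 \<or> i = 6" if "i < (7::nat)" for i
    using that by arith
  let ?B = "[l, p, q, X1, X2, X3, X4]"
  have tab: "\<forall>i<7. \<forall>j<7. br (?B ! i) (?B ! j) = target_table sm ?B i j"
  proof (intro allI impI)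
    fix i j :: nat assume i: "i < 7" and j: "j < 7"
    show "br (?B ! i) (?B ! j) = target_table sm ?B i j"
      using lt7[OF i] lt7[OF j]
      by (elim disjE) (simp_all add: target_table_def tb ll pl ql act annX)
  qed
  have sub: "{X1, X2, X3, X4} \<subseteq> I" using X1 X2 X3 X4 by blast
  show ?thesis
    apply (rule exI[of _ l], rule exI[of _ p], rule exI[of _ q], rule exI[of _ X1],
       rule exI[of _ X2], rule exI[of _ X3], rule exI[of _ X4])
    unfolding Let_def
    by (intro conjI dist indep span sub tab l p q)
qed

end


theorem mainTheorem1:
  fixes sm :: "complex \<Rightarrow> 'a::ab_group_add \<Rightarrow> 'a"
    and br :: "'a \<Rightarrow> 'a \<Rightarrow> 'a"
    and \<pi> :: "'a \<Rightarrow> e2"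
    and \<phi> :: "'a \<Rightarrow> modV"
  assumes vs: "vector_space sm"
    and bil: "is_bilinear sm br"
    and leib: "right_leibniz br"
    \<comment> \<open>L / I is isomorphic to e(2): a surjective linear Lie homomorphism with kernel I\<close>
    and pi_lin: "Vector_Spaces.linear sm e2_scale \<pi>"
    and pi_surj: "surj \<pi>"
    and pi_ker: "{x. \<pi> x = (0, 0, 0)} = square_ideal sm br"
    and pi_hom: "\<forall>x y. \<pi> (br x y) = e2_br (\<pi> x) (\<pi> y)"
    \<comment> \<open>I is isomorphic to V as right e(2)-module, action (i, x + I) |-> [i, x]\<close>
    and phi_add: "\<forall>u\<in>square_ideal sm br. \<forall>v\<in>square_ideal sm br. \<phi> (u + v) = \<phi> u + \<phi> v"
    and phi_scale: "\<forall>c. \<forall>u\<in>square_ideal sm br. \<phi> (sm c u) = (case \<phi> u of (x1, x2, x3, x4) \<Rightarrow> (c * x1, c * x2, c * x3, c * x4))"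
    and phi_bij: "bij_betw \<phi> (square_ideal sm br) UNIV"
    and phi_equiv: "\<forall>i\<in>square_ideal sm br. \<forall>x. \<phi> (br i x) = V_act (\<phi> i) (\<pi> x)"
  shows "\<exists>l pp pm X1 X2 X3 X4.
           (let B = [l, pp, pm, X1, X2, X3, X4] in
              distinct B \<and> \<not> module.dependent sm (set B) \<and> module.span sm (set B) = UNIV
            \<and> {X1, X2, X3, X4} \<subseteq> square_ideal sm br
            \<and> \<pi> l = (1, 0, 0) \<and> \<pi> pp = (0, 1, 0) \<and> \<pi> pm = (0, 0, 1)
            \<and> (\<forall>i<7. \<forall>j<7. br (B ! i) (B ! j) = target_table sm B i j))"
  proof -
  interpret SU sm br \<pi> \<phi>
    by (rule SU.intro) (rule assms)+
  show ?thesis by (rule final)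
qed

end
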